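(* Let the plant transfer function be proper, with the sum of its poles negative (so $a_{n-1}>0$) and its first nonzero Markov parameter positive (so $b_{n-1}\ge0$). Suppose the smooth feedback system $\dot\zeta=A\zeta-B\tanh(\gamma C\zeta)$ possesses a periodic orbit that has a finite period and a finite number of crossings of the hyperplane $\{Cx=0\}$, all transversal. Then, as the gain $\gamma$ is taken to infinity, the linearized flow around this periodic orbit shrinks volume in phase space.
   Context: The plant is $\frac{b(s)}{a(s)}=\frac{b_{n-1}s^{n-1}+\dots+b_0}{s^n+a_{n-1}s^{n-1}+\dots+a_0}$, with realization: $A$ with $A_{i+1,i}=1$ ($i=1,\dots,n-1$), last column $(-a_0,\dots,-a_{n-1})^T$, other entries zero; $B=(b_0,\dots,b_{n-1})^T$; $C=(0,\dots,0,1)$. The linearized flow around a periodic orbit $p(t;\gamma)$ is $\dot\delta=\bigl[A-\frac{\gamma}{\cosh^2(\gamma Cp(t;\gamma))}BC\bigr]\delta$; volume shrinkage over one period means the determinant of its monodromy matrix $\Phi(T_{\rm period},0)$ is less than one. Transversal crossing at $t_0$ means $C\frac{d}{dt}p(t_0;\gamma)\neq0$. *)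

theory Defs
  imports Complex_Main "Jordan_Normal_Form.Determinant"
begin

text \<open>Realization of b(s)/a(s) (0-indexed): a i = a_i, b i = b_i for i < n.\<close>

definition Amat :: "nat \<Rightarrow> (nat \<Rightarrow> real) \<Rightarrow> real mat" where
  "Amat n a = mat n n (\<lambda>(i,j). if j = n - 1 then - a i else if i = j + 1 then 1 else 0)"

definition Bmat :: "nat \<Rightarrow> (nat \<Rightarrow> real) \<Rightarrow> real mat" where
  "Bmat n b = mat n 1 (\<lambda>(i,j). b i)"

definition Cmat :: "nat \<Rightarrow> real mat" where
  "Cmat n = mat 1 n (\<lambda>(i,j). if j = n - 1 then 1 else 0)"

definition Cout :: "nat \<Rightarrow> real vec \<Rightarrow> real" where
  "Cout n x = (Cmat n *\<^sub>v x) $ 0"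

definition markov :: "nat \<Rightarrow> (nat \<Rightarrow> real) \<Rightarrow> (nat \<Rightarrow> real) \<Rightarrow> nat \<Rightarrow> real" where
  "markov n a b k = (Cmat n * (Amat n a ^\<^sub>m k) * Bmat n b) $$ (0,0)"

definition field :: "nat \<Rightarrow> (nat \<Rightarrow> real) \<Rightarrow> (nat \<Rightarrow> real) \<Rightarrow> real \<Rightarrow> real vec \<Rightarrow> real vec" where
  "field n a b \<gamma> x = Amat n a *\<^sub>v x - col (tanh (\<gamma> * Cout n x) \<cdot>\<^sub>m Bmat n b) 0"

definition periodic_orbit :: "nat \<Rightarrow> (nat \<Rightarrow> real) \<Rightarrow> (nat \<Rightarrow> real) \<Rightarrow> real \<Rightarrow> (real \<Rightarrow> real vec) \<Rightarrow> real \<Rightarrow> bool" where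
  "periodic_orbit n a b \<gamma> p T \<longleftrightarrow>
     (\<forall>t. dim_vec (p t) = n) \<and>
     (\<forall>t i. i < n \<longrightarrow> ((\<lambda>s. p s $ i) has_real_derivative (field n a b \<gamma> (p t)) $ i) (at t)) \<and>
     0 < T \<and> (\<forall>t. p (t + T) = p t) \<and>
     (\<forall>s. 0 < s \<and> s < T \<longrightarrow> (\<exists>t. p (t + s) \<noteq> p t))"

definition finite_transversal_crossings :: "nat \<Rightarrow> (nat \<Rightarrow> real) \<Rightarrow> (nat \<Rightarrow> real) \<Rightarrow> real \<Rightarrow> (real \<Rightarrow> real vec) \<Rightarrow> real \<Rightarrow> bool" where
  "finite_transversal_crossings n a b \<gamma> p T \<longleftrightarrow>
     finite {t. 0 \<le> t \<and> t < T \<and> Cout n (p t) = 0} \<and>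
     (\<forall>t. Cout n (p t) = 0 \<longrightarrow> Cout n (field n a b \<gamma> (p t)) \<noteq> 0)"

definition linmat :: "nat \<Rightarrow> (nat \<Rightarrow> real) \<Rightarrow> (nat \<Rightarrow> real) \<Rightarrow> real \<Rightarrow> (real \<Rightarrow> real vec) \<Rightarrow> real \<Rightarrow> real mat" where
  "linmat n a b \<gamma> p t = Amat n a - (\<gamma> / (cosh (\<gamma> * Cout n (p t)))\<^sup>2) \<cdot>\<^sub>m (Bmat n b * Cmat n)"

definition fundamental_matrix :: "nat \<Rightarrow> (real \<Rightarrow> real mat) \<Rightarrow> (real \<Rightarrow> real mat) \<Rightarrow> bool" where
  "fundamental_matrix n M \<Phi> \<longleftrightarrow>
     \<Phi> 0 = 1\<^sub>m n \<and> (\<forall>t. \<Phi> t \<in> carrier_mat n n) \<and>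
     (\<forall>t i j. i < n \<longrightarrow> j < n \<longrightarrow>
        ((\<lambda>s. \<Phi> s $$ (i,j)) has_real_derivative (M t * \<Phi> t) $$ (i,j)) (at t))"

end

theory Submission imports Defs begin

lemma perm_fix_all_but_one:
  assumes p: "p permutes S" and i: "i \<in> S" and fx: "\<forall>j\<in>S-{i}. p j = j"
  shows "p = id"
proof (rule ext)
  fix x
  show "p x = id x"
  proof (cases "x \<in> S")
    case False thus ?thesis using p by (simp add: permutes_not_in)
  next
    case True
    show ?thesis
    proof (cases "x = i")
      case False thus ?thesis using fx True by simp
    next
      case xi: True
      show ?thesis
      proof (rule ccontr)
        assume ne: "p x \<noteq> id x"
        have "p x \<in> S" using p True by (simp add: permutes_in_image)
        hence "p (p x) = p x" using fx ne xi by auto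
        hence "p x = x" using permutes_inj[OF p] by (auto dest: injD)
        thus False using ne by simp
      qed
    qed
  qed
qed

lemma det_E:
  fixes M :: "real mat"
  assumes i: "i < n"
  shows "det (mat n n (\<lambda>(r,c). if r = i then M $$ (i,c) else if r = c then 1 else 0)) = M $$ (i,i)"
    (is "det ?E = _")
proof -
  have E: "?E \<in> carrier_mat n n" by simp
  let ?t = "\<lambda>p. signof p * (\<Prod>j = 0..<n. ?E $$ (j, p j))"
  have fin: "finite {p. p permutes {0..<n}}" by (simp add: finite_permutations)
  have idin: "id \<in> {p. p permutes {0..<n}}" by (simp add: permutes_id)
  have z: "?t p = 0" if "p \<in> {p. p permutes {0..<n}} - {id}" for p
  proof -
    from that have p: "p permutes {0..<n}" and pn: "p \<noteq> id" by auto
    have "\<exists>j\<in>{0..<n}-{i}. p j \<noteq> j"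
      using perm_fix_all_but_one[OF p, of i] i pn by auto
    then obtain j where j0: "j \<in> {0..<n}-{i}" "p j \<noteq> j" by blast
    hence j: "j < n" "j \<noteq> i" "p j \<noteq> j" by auto
    have "p j < n" using p j by (auto dest: permutes_in_image)
    hence "?E $$ (j, p j) = 0" using j by simp
    hence "(\<Prod>j = 0..<n. ?E $$ (j, p j)) = 0"
      using j by (intro prod_zero) auto
    thus ?thesis by simp
  qed
  have "det ?E = (\<Sum>p\<in>{p. p permutes {0..<n}}. ?t p)" by (rule det_def'[OF E])
  also have "\<dots> = ?t id + (\<Sum>p\<in>{p. p permutes {0..<n}} - {id}. ?t p)"
    by (rule sum.remove[OF fin idin])
  also have "(\<Sum>p\<in>{p. p permutes {0..<n}} - {id}. ?t p) = 0"
    using z by (intro sum.neutral) blast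
  also have "?t id = M $$ (i,i)"
  proof -
    have "(\<Prod>j = 0..<n. ?E $$ (j, id j)) = ?E $$ (i, id i) * (\<Prod>j \<in> {0..<n}-{i}. ?E $$ (j, id j))"
      using i by (intro prod.remove) auto
    also have "(\<Prod>j \<in> {0..<n}-{i}. ?E $$ (j, id j)) = 1"
      by (intro prod.neutral) auto
    finally show ?thesis using i by (simp add: sign_id)
  qed
  finally show ?thesis by simp
qed

lemma jacobi:
  fixes P :: "real \<Rightarrow> real mat" and Mt :: "real mat"
  assumes P: "\<And>s. P s \<in> carrier_mat n n" and Mt: "Mt \<in> carrier_mat n n"
    and d: "\<And>i j. i < n \<Longrightarrow> j < n \<Longrightarrow>
       ((\<lambda>s. P s $$ (i,j)) has_real_derivative (Mt * P t) $$ (i,j)) (at t)"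
  shows "((\<lambda>s. det (P s)) has_real_derivative (\<Sum>i\<in>{0..<n}. Mt $$ (i,i)) * det (P t)) (at t)"
proof -
  define D where "D = Mt * P t"
  define Ps where "Ps = {p. p permutes {0..<n}}"
  have eq: "(\<lambda>s. det (P s)) = (\<lambda>s. \<Sum>p\<in>Ps. signof p * (\<Prod>j\<in>{0..<n}. P s $$ (j, p j)))"
    unfolding Ps_def using det_def'[OF P] by (intro ext) simp
  have der: "((\<lambda>s. \<Sum>p\<in>Ps. signof p * (\<Prod>j\<in>{0..<n}. P s $$ (j, p j))) has_real_derivative
     (\<Sum>p\<in>Ps. signof p * (\<Sum>i\<in>{0..<n}. D $$ (i, p i) * (\<Prod>j\<in>{0..<n}-{i}. P t $$ (j, p j))))) (at t)"
  proof (rule DERIV_sum, rule DERIV_cmult)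
    fix p assume "p \<in> Ps"
    hence p: "p permutes {0..<n}" unfolding Ps_def by simp
    show "((\<lambda>s. \<Prod>j\<in>{0..<n}. P s $$ (j, p j)) has_real_derivative
       (\<Sum>i\<in>{0..<n}. D $$ (i, p i) * (\<Prod>j\<in>{0..<n}-{i}. P t $$ (j, p j)))) (at t)"
      using has_field_derivative_prod[of "{0..<n}" "\<lambda>j s. P s $$ (j, p j)" "\<lambda>i. D $$ (i, p i)" t]
        d p unfolding D_def by (auto dest: permutes_in_image)
  qed
  define R where "R i = mat n n (\<lambda>(r,c). if r = i then D $$ (i,c) else P t $$ (r,c))" for i
  define E where "E i = mat n n (\<lambda>(r,c). if r = i then Mt $$ (i,c) else if r = c then 1 else (0::real))" for i
  have detR: "det (R i) = (\<Sum>p\<in>Ps. signof p * (D $$ (i, p i) * (\<Prod>j\<in>{0..<n}-{i}. P t $$ (j, p j))))"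
    if i: "i < n" for i
  proof -
    have "det (R i) = (\<Sum>p\<in>Ps. signof p * (\<Prod>j\<in>{0..<n}. R i $$ (j, p j)))"
      unfolding Ps_def by (rule det_def') (simp add: R_def)
    also have "\<dots> = (\<Sum>p\<in>Ps. signof p * (D $$ (i, p i) * (\<Prod>j\<in>{0..<n}-{i}. P t $$ (j, p j))))"
    proof (rule sum.cong[OF refl])
      fix p assume "p \<in> Ps"
      hence p: "p permutes {0..<n}" unfolding Ps_def by simp
      have pin: "\<And>j. j < n \<Longrightarrow> p j < n" using p by (auto dest: permutes_in_image)
      have "(\<Prod>j\<in>{0..<n}. R i $$ (j, p j)) = R i $$ (i, p i) * (\<Prod>j\<in>{0..<n}-{i}. R i $$ (j, p j))"
        using i by (intro prod.remove) auto
      also have "(\<Prod>j\<in>{0..<n}-{i}. R i $$ (j, p j)) = (\<Prod>j\<in>{0..<n}-{i}. P t $$ (j, p j))"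
        using pin by (intro prod.cong) (auto simp: R_def)
      also have "R i $$ (i, p i) = D $$ (i, p i)" using pin i by (simp add: R_def)
      finally show "signof p * (\<Prod>j\<in>{0..<n}. R i $$ (j, p j)) =
         signof p * (D $$ (i, p i) * (\<Prod>j\<in>{0..<n}-{i}. P t $$ (j, p j)))" by simp
    qed
    finally show ?thesis .
  qed
  have RE: "R i = E i * P t" if i: "i < n" for i
  proof (rule eq_matI)
    fix r c assume r: "r < dim_row (E i * P t)" and c: "c < dim_col (E i * P t)"
    hence r': "r < n" and c': "c < n" using P[of t] by (auto simp: E_def)
    have "(E i * P t) $$ (r, c) = (\<Sum>k\<in>{0..<n}. E i $$ (r,k) * P t $$ (k,c))"
      using r' c' P[of t] by (simp add: E_def scalar_prod_def)
    also have "\<dots> = R i $$ (r,c)"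
    proof (cases "r = i")
      case True
      have "D $$ (i,c) = (\<Sum>k\<in>{0..<n}. Mt $$ (i,k) * P t $$ (k,c))"
        using Mt P[of t] i c' by (simp add: D_def scalar_prod_def)
      thus ?thesis using True r' c' by (simp add: E_def R_def)
    next
      case False
      have "(\<Sum>k\<in>{0..<n}. E i $$ (r,k) * P t $$ (k,c)) = (\<Sum>k\<in>{0..<n}. (if r = k then P t $$ (k,c) else 0))"
        using False r' by (intro sum.cong) (auto simp: E_def)
      also have "\<dots> = P t $$ (r,c)" using r' by simp
      finally show ?thesis using False r' c' by (simp add: R_def)
    qed
    finally show "R i $$ (r, c) = (E i * P t) $$ (r, c)" by simp
  qed (use P[of t] in \<open>auto simp: R_def E_def\<close>)
  have detR2: "det (R i) = Mt $$ (i,i) * det (P t)" if i: "i < n" for i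
  proof -
    have "det (R i) = det (E i) * det (P t)"
      unfolding RE[OF i] by (rule det_mult[OF _ P]) (simp add: E_def)
    also have "det (E i) = Mt $$ (i,i)" unfolding E_def by (rule det_E[OF i])
    finally show ?thesis .
  qed
  have "(\<Sum>p\<in>Ps. signof p * (\<Sum>i\<in>{0..<n}. D $$ (i, p i) * (\<Prod>j\<in>{0..<n}-{i}. P t $$ (j, p j))))
     = (\<Sum>i\<in>{0..<n}. \<Sum>p\<in>Ps. signof p * (D $$ (i, p i) * (\<Prod>j\<in>{0..<n}-{i}. P t $$ (j, p j))))"
    by (simp add: sum_distrib_left sum.swap[of _ Ps])
  also have "\<dots> = (\<Sum>i\<in>{0..<n}. Mt $$ (i,i) * det (P t))"
    by (intro sum.cong) (auto simp: detR[symmetric] detR2)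
  also have "\<dots> = (\<Sum>i\<in>{0..<n}. Mt $$ (i,i)) * det (P t)" by (simp add: sum_distrib_right)
  finally show ?thesis using der eq by simp
qed

lemma markov0: "n \<ge> 1 \<Longrightarrow> markov n a b 0 = b (n - 1)"
proof -
  assume n: "n \<ge> 1"
  have "Cmat n * (Amat n a ^\<^sub>m 0) = Cmat n"
    by (simp add: Amat_def Cmat_def)
  hence "markov n a b 0 = (Cmat n * Bmat n b) $$ (0,0)" by (simp add: markov_def)
  also have "\<dots> = (\<Sum>k\<in>{0..<n}. (if k = n - 1 then 1 else 0) * b k)"
    by (simp add: Cmat_def Bmat_def scalar_prod_def)
  also have "\<dots> = (\<Sum>k\<in>{0..<n}. (if k = n - 1 then b k else 0))"
    by (intro sum.cong) auto
  also have "\<dots> = b (n - 1)" using n by simp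
  finally show ?thesis .
qed

lemma linmat_carrier: "linmat n a b g p t \<in> carrier_mat n n"
  unfolding linmat_def Amat_def Bmat_def Cmat_def
  by (rule minus_carrier_mat) (auto intro: mult_carrier_mat)

lemma linmat_diag: "i < n \<Longrightarrow> linmat n a b g p t $$ (i,i) =
   (if i = n - 1 then - a (n - 1) - (g / (cosh (g * Cout n (p t)))\<^sup>2) * b (n - 1) else 0)"
  by (simp add: linmat_def Amat_def Bmat_def Cmat_def scalar_prod_def)

lemma linmat_trace: "n \<ge> 1 \<Longrightarrow> (\<Sum>i\<in>{0..<n}. linmat n a b g p t $$ (i,i)) =
   - a (n - 1) - (g / (cosh (g * Cout n (p t)))\<^sup>2) * b (n - 1)"
proof -
  assume n: "n \<ge> 1"
  have "(\<Sum>i\<in>{0..<n}. linmat n a b g p t $$ (i,i)) = (\<Sum>i\<in>{0..<n}.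
     (if i = n - 1 then - a (n - 1) - (g / (cosh (g * Cout n (p t)))\<^sup>2) * b (n - 1) else 0))"
    by (intro sum.cong) (auto simp: linmat_diag)
  also have "\<dots> = - a (n - 1) - (g / (cosh (g * Cout n (p t)))\<^sup>2) * b (n - 1)" using n by simp
  finally show ?thesis .
qed

lemma det_decay:
  fixes f tau :: "real \<Rightarrow> real" and T :: real
  assumes T: "T > 0" and f0: "f 0 = 1" and tn: "\<And>t. tau t < 0"
    and fd: "\<And>t. (f has_real_derivative tau t * f t) (at t)"
  shows "f T < 1"
proof (rule ccontr)
  assume "\<not> f T < 1"
  hence fT: "f T \<ge> 1" by simp
  define h where "h s = (f s)^2" for s
  have hd: "(h has_real_derivative 2 * tau t * (f t)^2) (at t)" for t
    unfolding h_def using DERIV_power[OF fd[of t], of 2]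
    by (simp add: power2_eq_square algebra_simps)
  obtain z where z: "0 < z" "z < T" "h T - h 0 = (T - 0) * (2 * tau z * (f z)^2)"
    using MVT2[OF T, of h "\<lambda>t. 2 * tau t * (f t)^2"] hd by blast
  have hx: "\<exists>y. DERIV h x :> y \<and> y \<le> 0" for x
  proof -
    have "2 * tau x \<le> 0" using tn[of x] by simp
    hence "2 * tau x * (f x)^2 \<le> 0" by (rule mult_nonpos_nonneg) simp
    thus ?thesis using hd[of x] by blast
  qed
  have "h z \<ge> h T"
    by (rule DERIV_nonpos_imp_nonincreasing[of z T h]) (use z hx in auto)
  moreover have "h T \<ge> 1" unfolding h_def using fT by (simp add: one_le_power)
  ultimately have "(f z)^2 \<ge> 1" unfolding h_def by simp
  hence "0 < (f z)^2" by linarith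
  hence "tau z * (f z)^2 < 0" using tn[of z] mult_neg_pos[of "tau z" "(f z)^2"] by blast
  hence "2 * tau z * (f z)^2 < 0" by simp
  hence "h T - h 0 < 0" using z T by (simp add: mult_pos_neg)
  thus False using \<open>h T \<ge> 1\<close> f0 unfolding h_def by simp
qed

theorem mainTheorem17:
  fixes n :: nat and a b :: "nat \<Rightarrow> real"
    and p :: "real \<Rightarrow> real \<Rightarrow> real vec" and T :: "real \<Rightarrow> real"
  assumes n: "n \<ge> 1"
    and pole_sum: "a (n - 1) > 0"
    and markov_pos: "\<exists>k. (\<forall>j<k. markov n a b j = 0) \<and> markov n a b k > 0"
    and orbit: "\<forall>\<^sub>F \<gamma> in at_top. periodic_orbit n a b \<gamma> (p \<gamma>) (T \<gamma>)
                   \<and> finite_transversal_crossings n a b \<gamma> (p \<gamma>) (T \<gamma>)"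
  shows "\<forall>\<^sub>F \<gamma> in at_top. \<forall>\<Phi>. fundamental_matrix n (linmat n a b \<gamma> (p \<gamma>)) \<Phi>
             \<longrightarrow> det (\<Phi> (T \<gamma>)) < 1"
proof -
  have bnn: "b (n - 1) \<ge> 0"
  proof -
    obtain k where k: "\<forall>j<k. markov n a b j = 0" "markov n a b k > 0" using markov_pos by blast
    have "markov n a b 0 \<ge> 0" using k by (cases k) auto
    thus ?thesis using markov0[OF n] by simp
  qed
  have ev: "\<forall>\<^sub>F \<gamma> in at_top. (\<gamma>::real) > 0" by (rule eventually_gt_at_top)
  show ?thesis using eventually_conj[OF orbit ev]
  proof (rule eventually_mono)
    fix g :: real
    assume H: "(periodic_orbit n a b g (p g) (T g) \<and> finite_transversal_crossings n a b g (p g) (T g)) \<and> g > 0"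
    hence T0: "T g > 0" and g0: "g > 0" unfolding periodic_orbit_def by auto
    show "\<forall>\<Phi>. fundamental_matrix n (linmat n a b g (p g)) \<Phi> \<longrightarrow> det (\<Phi> (T g)) < 1"
    proof (intro allI impI)
      fix \<Phi> assume F: "fundamental_matrix n (linmat n a b g (p g)) \<Phi>"
      define tau where "tau t = (\<Sum>i\<in>{0..<n}. linmat n a b g (p g) t $$ (i,i))" for t
      have tn: "tau t < 0" for t
      proof -
        have "g / (cosh (g * Cout n (p g t)))\<^sup>2 \<ge> 0" using g0 by simp
        hence "(g / (cosh (g * Cout n (p g t)))\<^sup>2) * b (n - 1) \<ge> 0" using bnn by (rule mult_nonneg_nonneg)
        thus ?thesis unfolding tau_def linmat_trace[OF n] using pole_sum by simp
      qed
      have fd: "((\<lambda>s. det (\<Phi> s)) has_real_derivative tau t * det (\<Phi> t)) (at t)" for t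
        unfolding tau_def
        by (rule jacobi[OF _ linmat_carrier]) (use F in \<open>auto simp: fundamental_matrix_def\<close>)
      have f0: "det (\<Phi> 0) = 1" using F by (simp add: fundamental_matrix_def)
      show "det (\<Phi> (T g)) < 1"
        by (rule det_decay[of "T g" "\<lambda>s. det (\<Phi> s)" tau, OF T0 f0 tn fd])
    qed
  qed
qed

end
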